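(* Let $F$ be a fully-connected ReLU network with node maps $F_{ij}$ and canonical polyhedral complex $\mathcal{C}(F)$. For every cell $C$ of $\mathcal{C}(F)$ and every node map $F_{ij}$, the sign of $F_{ij}$ is constant on the interior $C^\circ$ of $C$, so the sign sequence $s(C)\in\{-1,0,1\}^N$, $s_{ij}(C)=\mathrm{sgn}(F_{ij}(x))$ for $x\in C^\circ$, is well-defined; moreover the map $s$ from the set of cells of $\mathcal{C}(F)$ to $\{-1,0,1\}^N$ is injective.
   Context: Polyhedra are intersections of finitely many closed half-spaces of some $\mathbb{R}^n$ (possibly unbounded); $C^\circ$ denotes the interior of a polyhedron $C$ relative to its affine span (a point is its own interior). A polyhedral complex is a finite set of polyhedra closed under taking faces such that any two members intersect in a common face. A ReLU network of architecture $(n_0,\dots,n_m,1)$ is given by affine maps $A_i:\mathbb{R}^{n_{i-1}}\to\mathbb{R}^{n_i}$, $1\le i\le m+1$, $n_{m+1}=1$; $F_i=\mathrm{ReLU}\circ A_i$ ($i\le m$, ReLU coordinatewise), $G=A_{m+1}$, $F=G\circ F_m\circ\cdots\circ F_1$, $F_{(k)}=F_k\circ\cdots\circ F_1$ ($F_{(0)}=\mathrm{id}$). The node maps are $F_{ij}=\pi_j\circ A_i\circ F_{(i-1)}:\mathbb{R}^{n_0}\to\mathbb{R}$ for $1\le i\le m+1$, $1\le j\le n_i$; $N=n_1+\cdots+n_m+1$ is their number. $R^{(i)}$ is the polyhedral complex on $\mathbb{R}^{n_{i-1}}$ induced by the hyperplanes $\{x:\pi_jA_i(x)=0\}$, $1\le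 j\le n_i$: its cells are the nonempty intersections obtained by choosing for each $j$ one of $\{\pi_jA_i\ge0\},\{\pi_jA_i\le0\},\{\pi_jA_i=0\}$. The canonical polyhedral complex: $\mathcal{C}(F_{(1)})=R^{(1)}$, $\mathcal{C}(F_{(k)})=\{C\cap F_{(k-1)}^{-1}(R)\ne\emptyset: C\in\mathcal{C}(F_{(k-1)}), R\in R^{(k)}\}$ for $2\le k\le m+1$ (using the arrangement of $G$ at step $m+1$), and $\mathcal{C}(F)$ is the last one; it is a polyhedral complex on $\mathbb{R}^{n_0}$. *)

theory Defs
  imports "HOL-Analysis.Analysis"
begin

text \<open>
A ReLU network of architecture (n0, n1, ..., nm, 1) with input space real^'n
(so n0 = CARD('n)) is given by
 - widths  n :: nat => nat  (n i = width of layer i, for 1 <= i <= m+1; n (m+1) = 1),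
 - first-layer weights  w1 j :: real^'n  and biases  b 1 j  (j < n 1),
 - for layers 2 <= i <= m+1: weights  W i j l  (j < n i, l < n (i-1)) and biases  b i j.
Neurons are indexed from 0, i.e. j < n i.  Hidden layer values are represented as
functions nat => real which vanish outside {..< n i}.
\<close>

text \<open>Pre-activation of neuron j in layer i, i.e. the node map F_ij = pi_j o A_i o F_(i-1).\<close>
fun node :: "(nat \<Rightarrow> real^'n) \<Rightarrow> (nat \<Rightarrow> nat \<Rightarrow> nat \<Rightarrow> real) \<Rightarrow> (nat \<Rightarrow> nat \<Rightarrow> real)
    \<Rightarrow> (nat \<Rightarrow> nat) \<Rightarrow> nat \<Rightarrow> nat \<Rightarrow> real^'n \<Rightarrow> real" where
  "node w1 W b n 0 j x = 0"
| "node w1 W b n (Suc 0) j x = w1 j \<bullet> x + b 1 j"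
| "node w1 W b n (Suc (Suc i)) j x =
     (\<Sum>l<n (Suc i). W (Suc (Suc i)) j l * max 0 (node w1 W b n (Suc i) l x)) + b (Suc (Suc i)) j"

definition hid :: "(nat \<Rightarrow> real^'n) \<Rightarrow> (nat \<Rightarrow> nat \<Rightarrow> nat \<Rightarrow> real) \<Rightarrow> (nat \<Rightarrow> nat \<Rightarrow> real)
    \<Rightarrow> (nat \<Rightarrow> nat) \<Rightarrow> nat \<Rightarrow> real^'n \<Rightarrow> (nat \<Rightarrow> real)" where
  "hid w1 W b n k x = (\<lambda>l. if l < n k then max 0 (node w1 W b n k l x) else 0)"

definition scond :: "int \<Rightarrow> real \<Rightarrow> bool" where
  "scond s t = (if s = 0 then t = 0 else if s > 0 then t \<ge> 0 else t \<le> 0)"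

definition arr1 :: "(nat \<Rightarrow> real^'n) \<Rightarrow> (nat \<Rightarrow> nat \<Rightarrow> real) \<Rightarrow> (nat \<Rightarrow> nat) \<Rightarrow> (real^'n) set set" where
  "arr1 w1 b n = {R. \<exists>\<sigma>. (\<forall>j<n 1. \<sigma> j \<in> {-1, 0, 1}) \<and>
       R = {x. \<forall>j<n 1. scond (\<sigma> j) (w1 j \<bullet> x + b 1 j)} \<and> R \<noteq> {}}"

definition arrk :: "(nat \<Rightarrow> nat \<Rightarrow> nat \<Rightarrow> real) \<Rightarrow> (nat \<Rightarrow> nat \<Rightarrow> real) \<Rightarrow> (nat \<Rightarrow> nat) \<Rightarrow> nat
    \<Rightarrow> (nat \<Rightarrow> real) set set" where
  "arrk W b n k = {R. \<exists>\<sigma>. (\<forall>j<n k. \<sigma> j \<in> {-1, 0, 1}) \<and>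
       R = {y. (\<forall>l. n (k - 1) \<le> l \<longrightarrow> y l = 0) \<and>
               (\<forall>j<n k. scond (\<sigma> j) ((\<Sum>l<n (k - 1). W k j l * y l) + b k j))} \<and> R \<noteq> {}}"

fun canon :: "(nat \<Rightarrow> real^'n) \<Rightarrow> (nat \<Rightarrow> nat \<Rightarrow> nat \<Rightarrow> real) \<Rightarrow> (nat \<Rightarrow> nat \<Rightarrow> real)
    \<Rightarrow> (nat \<Rightarrow> nat) \<Rightarrow> nat \<Rightarrow> (real^'n) set set" where
  "canon w1 W b n 0 = {UNIV}"
| "canon w1 W b n (Suc 0) = arr1 w1 b n"
| "canon w1 W b n (Suc (Suc k)) =
     {D. \<exists>C R. C \<in> canon w1 W b n (Suc k) \<and> R \<in> arrk W b n (Suc (Suc k)) \<and>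
            D = C \<inter> hid w1 W b n (Suc k) -` R \<and> D \<noteq> {}}"

definition signseq :: "(nat \<Rightarrow> real^'n) \<Rightarrow> (nat \<Rightarrow> nat \<Rightarrow> nat \<Rightarrow> real) \<Rightarrow> (nat \<Rightarrow> nat \<Rightarrow> real)
    \<Rightarrow> (nat \<Rightarrow> nat) \<Rightarrow> nat \<Rightarrow> (real^'n) set \<Rightarrow> nat \<times> nat \<Rightarrow> real" where
  "signseq w1 W b n m C = (\<lambda>(i, j). if 1 \<le> i \<and> i \<le> Suc m \<and> j < n i
       then sgn (node w1 W b n i j (SOME x. x \<in> rel_interior C)) else 0)"

end

theory Submission
  imports Defs
begin

definition cellset :: "(nat \<Rightarrow> real^'n) \<Rightarrow> (nat \<Rightarrow> nat \<Rightarrow> nat \<Rightarrow> real) \<Rightarrow> (nat \<Rightarrow> nat \<Rightarrow> real)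
    \<Rightarrow> (nat \<Rightarrow> nat) \<Rightarrow> nat \<Rightarrow> (nat \<Rightarrow> nat \<Rightarrow> int) \<Rightarrow> (real^'n) set" where
  "cellset w1 W b n k \<sigma> = {x. \<forall>i. 1 \<le> i \<and> i \<le> k \<longrightarrow> (\<forall>j<n i. scond (\<sigma> i j) (node w1 W b n i j x))}"

lemma hid_in_R:
  "(hid w1 W b n (Suc k) x \<in> {y. (\<forall>l. n (Suc (Suc k) - 1) \<le> l \<longrightarrow> y l = 0) \<and>
      (\<forall>j<n (Suc (Suc k)). scond (\<sigma>' j) ((\<Sum>l<n (Suc (Suc k) - 1). W (Suc (Suc k)) j l * y l) + b (Suc (Suc k)) j))})
   \<longleftrightarrow> (\<forall>j<n (Suc (Suc k)). scond (\<sigma>' j) (node w1 W b n (Suc (Suc k)) j x))"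
proof -
  have "(\<Sum>l<n (Suc k). W (Suc (Suc k)) j l * hid w1 W b n (Suc k) x l)
       = (\<Sum>l<n (Suc k). W (Suc (Suc k)) j l * max 0 (node w1 W b n (Suc k) l x))" for j
    by (rule sum.cong) (auto simp: hid_def)
  then show ?thesis by (auto simp: hid_def)
qed

lemma canon_cell:
  "D \<in> canon w1 W b n (Suc k) \<Longrightarrow> \<exists>\<sigma>. D = cellset w1 W b n (Suc k) \<sigma> \<and> D \<noteq> {}"
proof (induction k arbitrary: D)
  case 0
  then obtain \<sigma>' where D: "D = {x. \<forall>j<n 1. scond (\<sigma>' j) (w1 j \<bullet> x + b 1 j)}" "D \<noteq> {}"
    by (auto simp: arr1_def)
  have "D = cellset w1 W b n (Suc 0) (\<lambda>i j. \<sigma>' j)"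
    unfolding D cellset_def
  proof (intro Collect_cong iffI allI impI)
    fix x i j assume "\<forall>j<n 1. scond (\<sigma>' j) (w1 j \<bullet> x + b 1 j)" "1 \<le> i \<and> i \<le> Suc 0" "j < n i"
    then show "scond (\<sigma>' j) (node w1 W b n i j x)" by (subgoal_tac "i = 1") auto
  next
    fix x j assume "\<forall>i. 1 \<le> i \<and> i \<le> Suc 0 \<longrightarrow> (\<forall>j<n i. scond (\<sigma>' j) (node w1 W b n i j x))" "j < n 1"
    then show "scond (\<sigma>' j) (w1 j \<bullet> x + b 1 j)" by (metis One_nat_def le_refl node.simps(2))
  qed
  then show ?case using D by blast
next
  case (Suc k)
  from Suc.prems obtain C R where CR: "C \<in> canon w1 W b n (Suc k)" "R \<in> arrk W b n (Suc (Suc k))"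
    "D = C \<inter> hid w1 W b n (Suc k) -` R" "D \<noteq> {}" by auto
  from Suc.IH[OF CR(1)] obtain \<sigma> where C: "C = cellset w1 W b n (Suc k) \<sigma>" by blast
  from CR(2) obtain \<sigma>' where R: "R = {y. (\<forall>l. n (Suc (Suc k) - 1) \<le> l \<longrightarrow> y l = 0) \<and>
      (\<forall>j<n (Suc (Suc k)). scond (\<sigma>' j) ((\<Sum>l<n (Suc (Suc k) - 1). W (Suc (Suc k)) j l * y l) + b (Suc (Suc k)) j))}"
    unfolding arrk_def by blast
  have "D = cellset w1 W b n (Suc (Suc k)) (\<lambda>i j. if i = Suc (Suc k) then \<sigma>' j else \<sigma> i j)"
  proof -
    have hR: "hid w1 W b n (Suc k) x \<in> R \<longleftrightarrow> (\<forall>j<n (Suc (Suc k)). scond (\<sigma>' j) (node w1 W b n (Suc (Suc k)) j x))" for x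
      unfolding R by (rule hid_in_R)
    show ?thesis
      unfolding CR(3) C cellset_def vimage_def
      by (auto simp: hR le_Suc_eq)
  qed
  then show ?case using CR by blast
qed

lemma max_aff:
  fixes a c t :: real
  assumes "scond s a" "scond s c" "0 \<le> t" "t \<le> 1"
  shows "max 0 ((1-t)*a + t*c) = (1-t)*max 0 a + t * max 0 c"
proof -
  consider "s = 0" | "s > 0" | "s < 0" by linarith
  then show ?thesis
  proof cases
    case 1 then show ?thesis using assms by (simp add: scond_def)
  next
    case 2
    then have "a \<ge> 0" "c \<ge> 0" using assms by (auto simp: scond_def)
    moreover have "(1-t)*a + t*c \<ge> 0" using calculation assms by simp
    ultimately show ?thesis by simp
  next
    case 3
    then have "a \<le> 0" "c \<le> 0" using assms by (auto simp: scond_def)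
    moreover have "(1-t)*a + t*c \<le> 0" using calculation assms
      by (simp add: add_nonpos_nonpos mult_nonneg_nonpos)
    ultimately show ?thesis by simp
  qed
qed

lemma scond_conv:
  fixes a c t :: real
  assumes "scond s a" "scond s c" "0 \<le> t" "t \<le> 1"
  shows "scond s ((1-t)*a + t*c)"
  using assms by (auto simp: scond_def add_nonpos_nonpos mult_nonneg_nonpos)

lemma node_affine:
  assumes u: "u \<in> cellset w1 W b n k \<sigma>" and v: "v \<in> cellset w1 W b n k \<sigma>"
    and t: "0 \<le> t" "t \<le> 1"
  shows "i \<le> k \<Longrightarrow> node w1 W b n i j ((1-t) *\<^sub>R u + t *\<^sub>R v)
           = (1-t) * node w1 W b n i j u + t * node w1 W b n i j v"
proof (induction i arbitrary: j rule: less_induct)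
  case (less i)
  show ?case
  proof (cases i)
    case 0 then show ?thesis by simp
  next
    case (Suc i')
    show ?thesis
    proof (cases i')
      case 0 then show ?thesis using Suc by (simp add: algebra_simps inner_add_right)
    next
      case (Suc i'')
      have IH: "node w1 W b n (Suc i'') l ((1-t) *\<^sub>R u + t *\<^sub>R v)
           = (1-t) * node w1 W b n (Suc i'') l u + t * node w1 W b n (Suc i'') l v" for l
        using less Suc \<open>i = Suc i'\<close> by simp
      have "max 0 (node w1 W b n (Suc i'') l ((1-t) *\<^sub>R u + t *\<^sub>R v))
          = (1-t) * max 0 (node w1 W b n (Suc i'') l u) + t * max 0 (node w1 W b n (Suc i'') l v)"
        if "l < n (Suc i'')" for l
      proof -
        have "Suc i'' \<le> k" using less Suc \<open>i = Suc i'\<close> by simp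
        then have "scond (\<sigma> (Suc i'') l) (node w1 W b n (Suc i'') l u)"
          "scond (\<sigma> (Suc i'') l) (node w1 W b n (Suc i'') l v)"
          using u v that by (auto simp: cellset_def)
        then show ?thesis unfolding IH using max_aff t by blast
      qed
      then have "node w1 W b n i j ((1-t) *\<^sub>R u + t *\<^sub>R v)
         = (\<Sum>l<n (Suc i''). W i j l * ((1-t) * max 0 (node w1 W b n (Suc i'') l u) + t * max 0 (node w1 W b n (Suc i'') l v))) + b i j"
        using Suc \<open>i = Suc i'\<close> by simp
      also have "\<dots> = (1-t) * node w1 W b n i j u + t * node w1 W b n i j v"
      proof -
        have e: "W i j l * ((1-t) * A l + t * B l) = (1-t) * (W i j l * A l) + t * (W i j l * B l)" for l and A B :: "nat \<Rightarrow> real"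
          by (simp add: algebra_simps)
        let ?A = "\<lambda>l. max 0 (node w1 W b n (Suc i'') l u)"
        let ?B = "\<lambda>l. max 0 (node w1 W b n (Suc i'') l v)"
        have s: "(\<Sum>l<n (Suc i''). W i j l * ((1-t) * ?A l + t * ?B l))
           = (1-t) * (\<Sum>l<n (Suc i''). W i j l * ?A l) + t * (\<Sum>l<n (Suc i''). W i j l * ?B l)"
        proof -
          have "(1-t) * (\<Sum>l<n (Suc i''). W i j l * ?A l) + t * (\<Sum>l<n (Suc i''). W i j l * ?B l)
             = (\<Sum>l<n (Suc i''). (1-t) * (W i j l * ?A l) + t * (W i j l * ?B l))"
            by (simp add: sum.distrib sum_distrib_left)
          also have "\<dots> = (\<Sum>l<n (Suc i''). W i j l * ((1-t) * ?A l + t * ?B l))"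
            by (rule sum.cong) (auto simp: algebra_simps)
          finally show ?thesis by simp
        qed
        have "node w1 W b n i j u = (\<Sum>l<n (Suc i''). W i j l * ?A l) + b i j"
             "node w1 W b n i j v = (\<Sum>l<n (Suc i''). W i j l * ?B l) + b i j"
          using Suc \<open>i = Suc i'\<close> by simp_all
        then show ?thesis unfolding s by (simp add: algebra_simps)
      qed
      finally show ?thesis .
    qed
  qed
qed

lemma cellset_convex: "convex (cellset w1 W b n k \<sigma>)"
  unfolding convex_alt
proof (intro ballI allI impI)
  fix u v and t :: real
  assume u: "u \<in> cellset w1 W b n k \<sigma>" and v: "v \<in> cellset w1 W b n k \<sigma>" and t: "0 \<le> t \<and> t \<le> 1"
  show "(1 - t) *\<^sub>R u + t *\<^sub>R v \<in> cellset w1 W b n k \<sigma>"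
    unfolding cellset_def
  proof (intro CollectI allI impI)
    fix i j assume i: "1 \<le> i \<and> i \<le> k" and j: "j < n i"
    have "scond (\<sigma> i j) (node w1 W b n i j u)" "scond (\<sigma> i j) (node w1 W b n i j v)"
      using u v i j by (auto simp: cellset_def)
    then show "scond (\<sigma> i j) (node w1 W b n i j ((1 - t) *\<^sub>R u + t *\<^sub>R v))"
      using node_affine[OF u v] t i scond_conv by simp
  qed
qed


lemma zero_spread:
  assumes C: "C = cellset w1 W b n k \<sigma>" and x0: "x0 \<in> rel_interior C" and y: "y \<in> C"
    and i: "1 \<le> i" "i \<le> k" and j: "j < n i" and z: "node w1 W b n i j x0 = 0"
  shows "node w1 W b n i j y = 0"
proof -
  have cv: "convex C" using C cellset_convex by simp
  have "y \<in> affine hull C" using y by (simp add: hull_inc)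
  from convex_rel_interior_if[OF cv x0] this obtain m :: real where m: "m > 1"
    "\<forall>e. e > 1 \<and> e \<le> m \<longrightarrow> (1 - e) *\<^sub>R y + e *\<^sub>R x0 \<in> C" by blast
  define p where "p = (1 - m) *\<^sub>R y + m *\<^sub>R x0"
  have p: "p \<in> C" using m unfolding p_def by auto
  define t where "t = 1 / m"
  have t: "0 < t" "t < 1" using m by (auto simp: t_def)
  have "(1 - t) *\<^sub>R y + t *\<^sub>R p = ((1 - t) + t * (1 - m)) *\<^sub>R y + (t * m) *\<^sub>R x0"
    by (simp add: p_def scaleR_add_right scaleR_add_left)
  also have "(1 - t) + t * (1 - m) = 0" using m by (simp add: t_def field_simps)
  also have "t * m = 1" using m by (simp add: t_def)
  finally have x0eq: "x0 = (1 - t) *\<^sub>R y + t *\<^sub>R p" by simp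
  have yc: "y \<in> cellset w1 W b n k \<sigma>" and pc: "p \<in> cellset w1 W b n k \<sigma>" using y p C by auto
  have "0 = (1 - t) * node w1 W b n i j y + t * node w1 W b n i j p"
    using node_affine[OF yc pc, of t i j] t i z x0eq by simp
  moreover have "scond (\<sigma> i j) (node w1 W b n i j y)" "scond (\<sigma> i j) (node w1 W b n i j p)"
    using yc pc i j by (auto simp: cellset_def)
  ultimately show ?thesis using t
    by (auto simp: scond_def split: if_splits)
       (smt (verit, best) mult_pos_pos mult_nonneg_nonneg mult_pos_neg mult_nonneg_nonpos)+
qed

lemma sign_const:
  assumes C: "C = cellset w1 W b n k \<sigma>" and x: "x \<in> rel_interior C" and y: "y \<in> rel_interior C"
    and i: "1 \<le> i" "i \<le> k" and j: "j < n i"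
  shows "sgn (node w1 W b n i j x) = sgn (node w1 W b n i j y)"
proof -
  have xC: "x \<in> C" and yC: "y \<in> C" using x y rel_interior_subset by auto
  have sx: "scond (\<sigma> i j) (node w1 W b n i j x)" and sy: "scond (\<sigma> i j) (node w1 W b n i j y)"
    using xC yC C i j by (auto simp: cellset_def)
  have "node w1 W b n i j x = 0 \<longleftrightarrow> node w1 W b n i j y = 0"
    using zero_spread[OF C x yC i j] zero_spread[OF C y xC i j] by blast
  then show ?thesis using sx sy by (auto simp: scond_def sgn_if split: if_splits)
qed

theorem theorem14:
  fixes w1 :: "nat \<Rightarrow> real^'n" and W :: "nat \<Rightarrow> nat \<Rightarrow> nat \<Rightarrow> real"
    and b :: "nat \<Rightarrow> nat \<Rightarrow> real" and n :: "nat \<Rightarrow> nat" and m :: nat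
  assumes "n 0 = CARD('n)" and "n (Suc m) = 1"
  shows "(\<forall>C \<in> canon w1 W b n (Suc m). \<forall>i \<in> {1..Suc m}. \<forall>j < n i.
            \<exists>\<sigma> \<in> {-1, 0, 1::real}. \<forall>x \<in> rel_interior C. sgn (node w1 W b n i j x) = \<sigma>)
         \<and> inj_on (signseq w1 W b n m) (canon w1 W b n (Suc m))"
proof
  have ri: "(SOME x. x \<in> rel_interior C) \<in> rel_interior C" if Cc: "C \<in> canon w1 W b n (Suc m)" for C
  proof -
    obtain \<sigma> where "C = cellset w1 W b n (Suc m) \<sigma>" "C \<noteq> {}" using canon_cell[OF Cc] by blast
    then have "rel_interior C \<noteq> {}" using rel_interior_eq_empty cellset_convex by metis
    then show ?thesis by (simp add: some_in_eq)
  qed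
  show "\<forall>C \<in> canon w1 W b n (Suc m). \<forall>i \<in> {1..Suc m}. \<forall>j < n i.
            \<exists>\<sigma> \<in> {-1, 0, 1::real}. \<forall>x \<in> rel_interior C. sgn (node w1 W b n i j x) = \<sigma>"
  proof (intro ballI allI impI)
    fix C i j assume C: "C \<in> canon w1 W b n (Suc m)" and i: "i \<in> {1..Suc m}" and j: "j < n i"
    obtain \<sigma> where Cs: "C = cellset w1 W b n (Suc m) \<sigma>" using canon_cell[OF C] by blast
    define x0 where "x0 = (SOME x. x \<in> rel_interior C)"
    have x0: "x0 \<in> rel_interior C" using ri[OF C] x0_def by simp
    have "sgn (node w1 W b n i j x0) \<in> {-1, 0, 1::real}" by (auto simp: sgn_if)
    moreover have "\<forall>x \<in> rel_interior C. sgn (node w1 W b n i j x) = sgn (node w1 W b n i j x0)"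
      using sign_const[OF Cs _ x0] i j by auto
    ultimately show "\<exists>\<sigma> \<in> {-1, 0, 1::real}. \<forall>x \<in> rel_interior C. sgn (node w1 W b n i j x) = \<sigma>"
      by blast
  qed
  have sub: "C \<subseteq> C'" if C: "C \<in> canon w1 W b n (Suc m)" and C': "C' \<in> canon w1 W b n (Suc m)"
    and eq: "signseq w1 W b n m C = signseq w1 W b n m C'" for C C'
  proof
    fix x assume x: "x \<in> C"
    obtain \<sigma> where Cs: "C = cellset w1 W b n (Suc m) \<sigma>" using canon_cell[OF C] by blast
    obtain \<sigma>' where Cs': "C' = cellset w1 W b n (Suc m) \<sigma>'" using canon_cell[OF C'] by blast
    define x0 where "x0 = (SOME x. x \<in> rel_interior C)"
    have x0: "x0 \<in> rel_interior C" using ri[OF C] x0_def by simp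
    define x0' where "x0' = (SOME x. x \<in> rel_interior C')"
    have x0': "x0' \<in> rel_interior C'" using ri[OF C'] x0'_def by simp
    have x0C: "x0 \<in> C" and x0C': "x0' \<in> C'" using x0 x0' rel_interior_subset by auto
    show "x \<in> C'" unfolding Cs' cellset_def
    proof (intro CollectI allI impI)
      fix i j assume i: "1 \<le> i \<and> i \<le> Suc m" and j: "j < n i"
      have "signseq w1 W b n m C (i, j) = signseq w1 W b n m C' (i, j)" using eq by simp
      then have sg: "sgn (node w1 W b n i j x0) = sgn (node w1 W b n i j x0')"
        using i j by (simp add: signseq_def x0_def x0'_def)
      have s0: "scond (\<sigma> i j) (node w1 W b n i j x0)" "scond (\<sigma> i j) (node w1 W b n i j x)"
        using x0C x Cs i j by (auto simp: cellset_def)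
      have s1: "scond (\<sigma>' i j) (node w1 W b n i j x0')"
        using x0C' Cs' i j by (auto simp: cellset_def)
      have z: "node w1 W b n i j x0 = 0 \<Longrightarrow> node w1 W b n i j x = 0"
        using zero_spread[OF Cs x0 x] i j by auto
      show "scond (\<sigma>' i j) (node w1 W b n i j x)"
        using sg s0 s1 z by (auto simp: scond_def sgn_if split: if_splits)
    qed
  qed
  show "inj_on (signseq w1 W b n m) (canon w1 W b n (Suc m))"
    by (rule inj_onI) (metis sub subset_antisym)
qed

end
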